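(* Let $k$ be even, $1\le s\le k-1$, and let $G$ be a $k$-uniform $s$-cycle with $m$ edges and $n=m(k-s)$ vertices. Assume that $k=q(k-s)$ for some integer $q$, and write $q=2^{t_0}(2l_0+1)$ with nonnegative integers $t_0,l_0$. Then $G$ is odd-bipartite if and only if $m$ is a multiple of $2^{t_0}$.
   Context: A $k$-uniform $s$-cycle with $m$ edges has vertex set $\mathbb{Z}_n$, $n=m(k-s)$ (vertex $n+i$ identified with $i$), and edges $e_j=\{j(k-s)+1,\ldots,j(k-s)+k\}$, $j=0,\ldots,m-1$; it is assumed that $n\ge 2k-s$. A $k$-uniform hypergraph with $k$ even and vertex set $V$ is odd-bipartite if either it has no edges or there is a partition $V=V_1\cup V_2$ with $V_1,V_2\ne\emptyset$ such that every edge intersects $V_1$ in an odd number of vertices. *)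

theory Defs
  imports Main
begin

text \<open>Vertex set of the k-uniform s-cycle with m edges: Z_n represented as {0..<n}, n = m(k-s).
  Edge e_j = {j(k-s)+1, ..., j(k-s)+k}, taken mod n.\<close>

definition scycle_vertices :: "nat \<Rightarrow> nat \<Rightarrow> nat \<Rightarrow> nat set" where
  "scycle_vertices k s m = {0..<m * (k - s)}"

definition scycle_edge :: "nat \<Rightarrow> nat \<Rightarrow> nat \<Rightarrow> nat \<Rightarrow> nat set" where
  "scycle_edge k s m j = (\<lambda>i. (j * (k - s) + i) mod (m * (k - s))) ` {1..k}"

definition scycle_edges :: "nat \<Rightarrow> nat \<Rightarrow> nat \<Rightarrow> nat set set" where
  "scycle_edges k s m = {scycle_edge k s m j | j. j < m}"

definition odd_bipartite :: "'a set \<Rightarrow> 'a set set \<Rightarrow> bool" where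
  "odd_bipartite V E \<longleftrightarrow> E = {} \<or>
     (\<exists>V1 V2. V1 \<union> V2 = V \<and> V1 \<inter> V2 = {} \<and> V1 \<noteq> {} \<and> V2 \<noteq> {} \<and>
        (\<forall>e\<in>E. odd (card (e \<inter> V1))))"

end

theory Submission
  imports Defs
begin

lemma per_mult: fixes p c x :: nat assumes "\<forall>x. f (x+p) = f x" shows "f (x + c*p) = f x"
proof (induction c)
  case 0 then show ?case by simp
next
  case (Suc c)
  have "x + Suc c * p = (x + c*p) + p" by simp
  then show ?case using assms Suc by metis
qed

lemma per_mod: fixes p x :: nat assumes "\<forall>x. f (x+p) = f x" shows "f x = f (x mod p)"
  using per_mult[OF assms, of "x mod p" "x div p"] by (metis mod_div_mult_eq)

lemma win_shift: fixes p a :: nat and w :: "nat \<Rightarrow> nat" assumes "\<forall>x. w (x+p) = w x" shows "(\<Sum>i<p. w (a+i)) = (\<Sum>i<p. w i)"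
proof (induction a)
  case 0 show ?case by simp
next
  case (Suc a)
  have "(\<Sum>i<p. w (Suc a+i)) = (\<Sum>i<p. w (a+i))"
  proof (cases p)
    case 0 then show ?thesis by simp
  next
    case (Suc p')
    have 1: "(\<Sum>i<p. w (Suc a+i)) = (\<Sum>i<p'. w (Suc a+i)) + w (Suc a + p')" using Suc by simp
    have 2: "(\<Sum>i<p. w (a+i)) = w a + (\<Sum>i<p'. w (a + Suc i))" using Suc sum.lessThan_Suc_shift[of "\<lambda>i. w(a+i)" p'] by simp
    have 3: "w (Suc a + p') = w a" using assms Suc by (metis add_Suc_right add_Suc)
    show ?thesis using 1 2 3 by simp
  qed
  with Suc show ?case by simp
qed

lemma sum_split: fixes n p :: nat shows "(\<Sum>r< n + p. f r) = (\<Sum>r<n. f r) + (\<Sum>i<p. (f (n+i)::nat))"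
  by (induction p) auto

lemma win_sum: fixes p a c :: nat and w :: "nat \<Rightarrow> nat" assumes "\<forall>x. w (x+p) = w x" shows "(\<Sum>r<c*p. w (a+r)) = c * (\<Sum>i<p. w i)"
proof (induction c)
  case 0 then show ?case by simp
next
  case (Suc c)
  have "Suc c * p = c*p + p" by simp
  then have "(\<Sum>r<Suc c*p. w (a+r)) = (\<Sum>r<c*p. w (a+r)) + (\<Sum>i<p. w ((a + c*p) + i))"
    using sum_split[where n="c*p" and p=p and f="\<lambda>r. w (a+r)"] by (simp add: ac_simps)
  also have "\<dots> = Suc c * (\<Sum>i<p. w i)" using Suc win_shift[OF assms, of "a+c*p"] by simp
  finally show ?case .
qed

lemma block: fixes q d j :: nat shows "(\<Sum>i<q*d. (F (j*d+i)::nat)) = (\<Sum>r<q. \<Sum>i<d. F ((j+r)*d+i))"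
proof (induction q)
  case 0 then show ?case by simp
next
  case (Suc q)
  have "Suc q * d = q*d + d" by simp
  then have "(\<Sum>i<Suc q*d. F (j*d+i)) = (\<Sum>i<q*d. F (j*d+i)) + (\<Sum>i<d. F ((j+q)*d+i))"
    using sum_split[where n="q*d" and p=d and f="\<lambda>i. F (j*d+i)"] by (simp add: algebra_simps)
  then show ?case using Suc by simp
qed

lemma card_edge:
  assumes "k < m*d" "d = k-s"
  shows "card (scycle_edge k s m j \<inter> V1) = (\<Sum>i<k. if (j*d+i+1) mod (m*d) \<in> V1 then 1 else 0)"
proof -
  define g where "g = (\<lambda>i. (j*d+i) mod (m*d))"
  have inj: "inj_on g {1..k}"
  proof (rule inj_onI)
    fix a b assume a: "a \<in> {1..k}" and b: "b \<in> {1..k}" and e: "g a = g b"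
    show "a = b"
    proof (rule ccontr)
      assume "a \<noteq> b"
      then consider "a < b" | "b < a" by linarith
      then show False
      proof cases
        case 1
        then have "m*d dvd (j*d+b) - (j*d+a)" using e mod_eq_dvd_iff_nat[of "j*d+a" "j*d+b" "m*d"]
          unfolding g_def by simp
        then have "m*d dvd b - a" by simp
        moreover have "0 < b - a" "b - a < m*d" using 1 a b assms by auto
        ultimately show False using nat_dvd_not_less by blast
      next
        case 2
        then have "m*d dvd (j*d+a) - (j*d+b)" using e mod_eq_dvd_iff_nat[of "j*d+b" "j*d+a" "m*d"]
          unfolding g_def by simp
        then have "m*d dvd a - b" by simp
        moreover have "0 < a - b" "a - b < m*d" using 2 a b assms by auto
        ultimately show False using nat_dvd_not_less by blast
      qed
    qed
  qed
  have "scycle_edge k s m j \<inter> V1 = g ` {i\<in>{1..k}. g i \<in> V1}"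
    unfolding scycle_edge_def g_def using assms(2) by auto
  then have "card (scycle_edge k s m j \<inter> V1) = card {i\<in>{1..k}. g i \<in> V1}"
    by (metis (no_types, lifting) card_image inj inj_on_subset mem_Collect_eq subsetI)
  also have "\<dots> = (\<Sum>i\<in>{1..k}. if g i \<in> V1 then 1 else 0)"
    by (simp add: sum.If_cases Int_def)
  also have "\<dots> = (\<Sum>i<k. if g (Suc i) \<in> V1 then 1 else 0)"
    using sum.atLeast1_atMost_eq[of "\<lambda>i. if g i \<in> V1 then 1 else 0" k] by simp
  finally show ?thesis unfolding g_def by simp
qed


lemma cardS:
  assumes "k < m*d" "d = k-s" "k = q*d"
  shows "card (scycle_edge k s m j \<inter> V1) = (\<Sum>r<q. \<Sum>i<d. if ((j+r)*d+i+1) mod (m*d) \<in> V1 then 1 else 0)"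
  using card_edge[OF assms(1,2), of j V1] block[where q=q and d=d and j=j and F="\<lambda>x. if (x+1) mod (m*d) \<in> V1 then 1 else 0"]
    assms(3) by simp

lemma forward:
  fixes d m q :: nat and V1 :: "nat set"
  assumes q0: "q > 0" and m0: "m > 0"
    and odd: "\<And>j. j < m \<Longrightarrow> odd (\<Sum>r<q. \<Sum>i<d. (if ((j+r)*d+i+1) mod (m*d) \<in> V1 then 1 else 0::nat))"
    and q: "q = 2 ^ t0 * (2 * l0 + 1)"
  shows "2 ^ t0 dvd m"
proof -
  define y where "y r = (\<Sum>i<d. (if (r*d+i+1) mod (m*d) \<in> V1 then 1 else 0::nat))" for r
  define S where "S j = (\<Sum>r<q. y (j+r))" for j
  have yper: "\<forall>x. y (x+m) = y x"
  proof
    fix x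
    have "\<And>i. ((x+m)*d+i+1) mod (m*d) = (x*d+i+1) mod (m*d)"
    proof -
      fix i
      have "(x+m)*d+i+1 = (x*d+i+1) + m*d" by (simp add: algebra_simps)
      then show "((x+m)*d+i+1) mod (m*d) = (x*d+i+1) mod (m*d)" by (metis mod_add_self2)
    qed
    then show "y (x+m) = y x" unfolding y_def by simp
  qed
  have Sper: "\<forall>x. S (x+m) = S x"
  proof
    fix x
    have "\<And>r. y (x+m+r) = y (x+r)" using yper by (metis add.assoc add.commute)
    then show "S (x+m) = S x" unfolding S_def by simp
  qed
  have oddS: "odd (S j)" for j
  proof -
    have "S j = S (j mod m)" using per_mod[OF Sper] by blast
    moreover have "odd (S (j mod m))" using odd[of "j mod m"] m0 unfolding S_def y_def by (simp add: add.commute)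
    ultimately show ?thesis by simp
  qed
  define z where "z r = y r mod 2" for r
  define T where "T j = (\<Sum>r<q. z (j+r))" for j
  have oddT: "odd (T j)" for j
  proof -
    have "T j mod 2 = S j mod 2" unfolding T_def S_def z_def by (rule mod_sum_eq)
    then show ?thesis using oddS[of j] by (simp add: odd_iff_mod_2_eq_one)
  qed
  have zq: "\<forall>x. z (x+q) = z x"
  proof
    fix j
    obtain q' where q': "q = Suc q'" using q0 by (cases q) auto
    have 1: "T (Suc j) = (\<Sum>r<q'. z (Suc j + r)) + z (j + q)" unfolding T_def using q' by simp
    have 2: "T j = z j + (\<Sum>r<q'. z (j + Suc r))" unfolding T_def using q' sum.lessThan_Suc_shift[of "\<lambda>r. z(j+r)" q'] by simp
    have e: "T (Suc j) + z j = T j + z (j+q)" using 1 2 by simp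
    have "z j < 2" "z (j+q) < 2" unfolding z_def by auto
    with e oddT[of j] oddT[of "Suc j"] show "z (j+q) = z j" by presburger
  qed
  have zm: "\<forall>x. z (x+m) = z x" using yper unfolding z_def by simp
  define g where "g = gcd q m"
  obtain a b where ab: "q*a = m*b + g" using bezout_nat[of q m] q0 unfolding g_def by auto
  have zg: "\<forall>x. z (x+g) = z x"
  proof
    fix x
    have "z (x+g) = z (x+g + b*m)" using per_mult[OF zm, of "x+g" b] by simp
    also have "x+g+b*m = x + a*q" using ab by (simp add: algebra_simps)
    also have "z (x + a*q) = z x" using per_mult[OF zq] by blast
    finally show "z (x+g) = z x" .
  qed
  have gq: "g dvd q" unfolding g_def by simp
  have qg: "q = (q div g) * g" using gq by simp
  have "T 0 = (\<Sum>r<(q div g)*g. z (0+r))" unfolding T_def using qg by simp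
  also have "\<dots> = (q div g) * (\<Sum>i<g. z i)" by (rule win_sum[OF zg])
  finally have "odd (q div g)" using oddT[of 0] by simp
  then have cop: "coprime (2^t0) (q div g)" by simp
  have "2^t0 dvd g * (q div g)" using q qg by (metis dvd_triv_left mult.commute)
  then have "2^t0 dvd g" using coprime_dvd_mult_left_iff[OF cop] by simp
  then show ?thesis unfolding g_def by (meson dvd_trans gcd_dvd2)
qed


lemma backward:
  fixes d m q h u :: nat
  assumes d0: "d > 0" and m0: "m > 0" and h0: "h > 0" and hm: "h dvd m" and q: "q = u*h" and oo: "odd u"
  defines "P \<equiv> \<lambda>x. d dvd x \<and> h dvd x div d"
  shows "odd (\<Sum>r<q. \<Sum>i<d. (if ((j+r)*d+i+1) mod (m*d) \<in> {v\<in>{0..<m*d}. P v} then 1 else 0::nat))"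
proof -
  have Pper: "\<forall>x. P (x + m*d) = P x"
  proof
    fix x
    have 1: "d dvd x + m*d \<longleftrightarrow> d dvd x" by simp
    have 2: "(x + m*d) div d = x div d + m" using d0 by simp
    have 3: "h dvd x div d + m \<longleftrightarrow> h dvd x div d" using hm by (simp add: dvd_add_left_iff)
    show "P (x + m*d) = P x" unfolding P_def using 1 2 3 by simp
  qed
  have mem: "x mod (m*d) \<in> {v\<in>{0..<m*d}. P v} \<longleftrightarrow> P x" for x
  proof -
    have "x mod (m*d) < m*d" using m0 d0 by simp
    moreover have "P x = P (x mod (m*d))" using per_mod[OF Pper] by blast
    ultimately show ?thesis by simp
  qed
  define y where "y r = (if h dvd r+1 then 1 else 0::nat)" for r
  have yr: "(\<Sum>i<d. (if ((r)*d+i+1) mod (m*d) \<in> {v\<in>{0..<m*d}. P v} then 1 else 0::nat)) = y r" for r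
  proof -
    obtain d' where d': "d = Suc d'" using d0 by (cases d) auto
    have z: "\<not> P (r*d+i+1)" if "i < d'" for i
    proof -
      have e: "r*d+i+1 = (i+1) + r*d" by simp
      have "(r*d+i+1) mod d = (i+1) mod d" unfolding e by simp
      also have "\<dots> = i+1" using that d' by simp
      finally have "(r*d+i+1) mod d \<noteq> 0" by simp
      then have "\<not> d dvd r*d+i+1" by (metis dvd_eq_mod_eq_0)
      then show ?thesis unfolding P_def by blast
    qed
    have last: "r*d+d'+1 = (r+1)*d" using d' by simp
    have "P ((r+1)*d) = (h dvd r+1)" unfolding P_def using d0 by simp
    then have pl: "P (r*d+d'+1) = (h dvd r+1)" unfolding last by simp
    have "(\<Sum>i<d. (if ((r)*d+i+1) mod (m*d) \<in> {v\<in>{0..<m*d}. P v} then 1 else 0::nat))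
        = (\<Sum>i<d. (if P (r*d+i+1) then 1 else 0::nat))" unfolding mem by simp
    also have "\<dots> = (\<Sum>i<d'. (if P (r*d+i+1) then 1 else 0::nat)) + (if P (r*d+d'+1) then 1 else 0)"
      unfolding d' by (rule sum.lessThan_Suc)
    finally have "(\<Sum>i<d. (if ((r)*d+i+1) mod (m*d) \<in> {v\<in>{0..<m*d}. P v} then 1 else 0::nat))
        = (\<Sum>i<d'. (if P (r*d+i+1) then 1 else 0::nat)) + y r"
      unfolding pl y_def by simp
    also have "(\<Sum>i<d'. (if P (r*d+i+1) then 1 else 0::nat)) = 0" using z by simp
    finally show ?thesis by simp
  qed
  have yper: "\<forall>x. y (x+h) = y x"
  proof
    fix x
    have "x + h + 1 = (x+1) + h" by simp
    then have "h dvd x+h+1 \<longleftrightarrow> h dvd x+1" by (metis dvd_add_triv_right_iff)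
    then show "y (x+h) = y x" unfolding y_def by simp
  qed
  have y1: "(\<Sum>i<h. y i) = 1"
  proof -
    obtain h' where h': "h = Suc h'" using h0 by (cases h) auto
    have "(\<Sum>i<h'. y i) = 0" unfolding y_def using h' by (auto simp: nat_dvd_not_less)
    then show ?thesis using h' by (simp add: y_def)
  qed
  have "(\<Sum>r<q. \<Sum>i<d. (if ((j+r)*d+i+1) mod (m*d) \<in> {v\<in>{0..<m*d}. P v} then 1 else 0::nat))
      = (\<Sum>r<u*h. y (j+r))" using yr q by simp
  also have "\<dots> = u" using win_sum[OF yper] y1 by simp
  finally show ?thesis using oo by simp
qed


theorem theorem4p1:
  fixes k s m q t0 l0 :: nat
  assumes "even k"
    and "1 \<le> s" and "s \<le> k - 1"
    and "m * (k - s) \<ge> 2 * k - s"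
    and "k = q * (k - s)"
    and "q = 2 ^ t0 * (2 * l0 + 1)"
  shows "odd_bipartite (scycle_vertices k s m) (scycle_edges k s m) \<longleftrightarrow> 2 ^ t0 dvd m"
proof -
  define d where "d = k - s"
  have k2: "k \<ge> 2" using assms(1,2,3) by presburger
  have d0: "d > 0" using assms(2,3) k2 unfolding d_def by linarith
  have kqd: "k = q*d" using assms(5) unfolding d_def .
  have q0: "q > 0" using kqd k2 by (cases q) auto
  have kn: "k < m*d" using assms(4) d0 assms(3) k2 unfolding d_def by linarith
  have m0: "m > 0" using kn by (cases m) auto
  show ?thesis
  proof
    assume ob: "odd_bipartite (scycle_vertices k s m) (scycle_edges k s m)"
    have "scycle_edge k s m 0 \<in> scycle_edges k s m" unfolding scycle_edges_def using m0 by auto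
    then have "scycle_edges k s m \<noteq> {}" by auto
    then obtain V1 where V1: "\<forall>e\<in>scycle_edges k s m. odd (card (e \<inter> V1))"
      using ob unfolding odd_bipartite_def by blast
    have "odd (\<Sum>r<q. \<Sum>i<d. (if ((j+r)*d+i+1) mod (m*d) \<in> V1 then 1 else 0::nat))" if "j < m" for j
    proof -
      have "scycle_edge k s m j \<in> scycle_edges k s m" unfolding scycle_edges_def using that by auto
      then have "odd (card (scycle_edge k s m j \<inter> V1))" using V1 by blast
      then show ?thesis using cardS[OF kn d_def kqd] by simp
    qed
    then show "2 ^ t0 dvd m" using forward[OF q0 m0 _ assms(6)] by blast
  next
    assume hm: "2 ^ t0 dvd m"
    define h :: nat where "h = 2 ^ t0"
    define P where "P \<equiv> \<lambda>x. d dvd x \<and> h dvd x div d"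
    define V1 where "V1 = {v\<in>{0..<m*d}. P v}"
    define V2 where "V2 = {v\<in>{0..<m*d}. \<not> P v}"
    have h0: "h > 0" unfolding h_def by simp
    have qh: "q = (2*l0+1)*h" using assms(6) unfolding h_def by simp
    have oddE: "odd (card (e \<inter> V1))" if eE: "e \<in> scycle_edges k s m" for e
    proof -
      obtain j where j: "j < m" "e = scycle_edge k s m j" using eE unfolding scycle_edges_def by blast
      have "odd (\<Sum>r<q. \<Sum>i<d. (if ((j+r)*d+i+1) mod (m*d) \<in> {v\<in>{0..<m*d}. P v} then 1 else 0::nat))"
        unfolding P_def by (rule backward[OF d0 m0 h0 hm[folded h_def] qh]) simp
      then show ?thesis using cardS[OF kn d_def kqd, of j V1] j unfolding V1_def by simp
    qed
    have "0 \<in> V1" unfolding V1_def P_def using m0 d0 by simp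
    moreover have "1 \<in> V2"
    proof -
      have "1 < m*d" using kn k2 by linarith
      moreover have "\<not> P 1"
      proof (cases "d = 1")
        case True
        then have "q = k" using kqd by simp
        then have "even q" using assms(1) by simp
        then have "t0 \<noteq> 0" using assms(6) by auto
        then have "h \<ge> 2" unfolding h_def by (simp add: self_le_power)
        then show ?thesis unfolding P_def using True by auto
      next
        case False
        then have "d \<ge> 2" using d0 by linarith
        then show ?thesis unfolding P_def by auto
      qed
      ultimately show ?thesis unfolding V2_def by simp
    qed
    moreover have "V1 \<union> V2 = scycle_vertices k s m" unfolding V1_def V2_def scycle_vertices_def d_def by auto
    moreover have "V1 \<inter> V2 = {}" unfolding V1_def V2_def by auto
    ultimately show "odd_bipartite (scycle_vertices k s m) (scycle_edges k s m)"
      unfolding odd_bipartite_def using oddE by blast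
  qed
qed

end
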